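(* Let $\Omega_0\subseteq\mathbb{R}^{p+1}$ be a domain and $A_0,A_1\in C^{\omega}(\Omega_0,\mathbb{A})$. Then $$GCK[A_0]=HGCK[A_0,0]+\frac1q\,HGCK[0,D_{\mathbf{x}_p}A_0],$$ and $$HGCK[A_0,A_1]=\mathcal{PE}\big[GCK[A_0]\big]+q\,\mathcal{PO}\big[GCK[f_0]\big],$$ where $f_0\in C^\omega(\Omega_0,\mathbb{A})$ is a solution of $D_{\mathbf{x}_p}f_0=A_1$, if it exists (identities holding where all terms are defined).
   Context: Let $\mathbb{A}$ be a real alternative algebra (the associator $[a,b,c]=(ab)c-a(bc)$ is an alternating trilinear function) with unity $1$, of finite real dimension $d>1$, equipped with an anti-involution $a\mapsto a^c$ (real linear, $a^c=a$ for real $a$, $(a^c)^c=a$, $(ab)^c=b^ca^c$). Let $t(x)=x+x^c$, $n(x)=xx^c$, $\mathbb{S}_{\mathbb{A}}=\{x: t(x)=0,\ n(x)=1\}$ (assumed nonempty) and $Q_{\mathbb{A}}=\mathbb{R}\cup\{x: t(x)\in\mathbb{R},\ n(x)\in\mathbb{R},\ 4n(x)>t(x)^2\}$. Let $M$ be a real subspace with $\mathbb{R}\subsetneq M\subseteq Q_{\mathbb{A}}$ having a basis $(v_0,\dots,v_m)$, $m\ge1$, $v_0=1$, $v_s\in\mathbb{S}_{\mathbb{A}}$, $v_sv_t=-v_tv_s$ for distinct $s,t\ge1$; complete it to a basis of $\mathbb{A}$ with associated Euclidean norm. Identify $x=\sum x_sv_s\in M$ with $(x_0,\dots,x_m)\in\mathbb{R}^{m+1}$;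 differentiate componentwise; $C^\omega$ = componentwise real analytic. Fix $p\in\{0,\dots,m-1\}$, $q=m-p$; $\mathbf{x}=\mathbf{x}_p+\underline{\mathbf{x}}_q$ with $\mathbf{x}_p=\sum_{s=0}^px_sv_s\in\mathbb{R}^{p+1}$, $\underline{\mathbf{x}}_q=\sum_{s=p+1}^m x_sv_s$; $r=|\underline{\mathbf{x}}_q|$. $D_{\mathbf{x}_p}f=\sum_{s=0}^p v_s\partial_{x_s}f$, $\Delta_{\mathbf{x}_p}=\sum_{s=0}^p\partial_{x_s}^2$. With $\mathbf{x}_\diamond=\mathbf{x}_p-\underline{\mathbf{x}}_q$: $\mathcal{PE}[h](\mathbf{x})=\frac12(h(\mathbf{x})+h(\mathbf{x}_\diamond))$, $\mathcal{PO}[h](\mathbf{x})=\frac12(h(\mathbf{x})-h(\mathbf{x}_\diamond))$. The monogenic generalized CK-extension of real analytic $g$ on $\Omega_0$ is $GCK[g](\mathbf{x})=\sum_{k\ge0}\frac{\Gamma(\frac q2)(-1)^kr^{2k}}{2^{2k}k!\Gamma(k+\frac q2)}\Delta_{\mathbf{x}_p}^kg(\mathbf{x}_p)+\underline{\mathbf{x}}_q\sum_{k\ge0}\frac{\Gamma(\frac q2)(-1)^kr^{2k}}{2^{2k+1}k!\Gamma(k+\frac q2+1)}\Delta_{\mathbf{x}_p}^k(D_{\mathbf{x}_p}g(\mathbf{x}_p))$, the unique function of the form $\sum_k\underline{\mathbf{x}}_q^kA_k(\mathbf{x}_p)$ ($A_k$ real analytic, $A_0=g$) which is monogenic ($\sum_{s=0}^mv_s\partial_{x_s}f=0$)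 on a p-symmetric neighbourhood of $\Omega_0$; the harmonic generalized CK-extension of $(A_0,A_1)$ is $HGCK[A_0,A_1](\mathbf{x})=\sum_{k\ge0}\frac{\Gamma(\frac q2)(-1)^kr^{2k}}{2^{2k}k!\Gamma(k+\frac q2)}\Delta_{\mathbf{x}_p}^kA_0(\mathbf{x}_p)+\underline{\mathbf{x}}_q\sum_{k\ge0}\frac{\Gamma(\frac q2+1)(-1)^kr^{2k}}{2^{2k}k!\Gamma(k+\frac q2+1)}\Delta_{\mathbf{x}_p}^kA_1(\mathbf{x}_p)$, the unique function of the form $\sum_k\underline{\mathbf{x}}_q^kA_k(\mathbf{x}_p)$ with the given $A_0,A_1$ which is harmonic there. *)

theory Defs
  imports "HOL-Analysis.Analysis"
begin

definition assoc_A :: "('a::real_vector \<Rightarrow> 'a \<Rightarrow> 'a) \<Rightarrow> 'a \<Rightarrow> 'a \<Rightarrow> 'a \<Rightarrow> 'a" where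
  "assoc_A mul a b c = mul (mul a b) c - mul a (mul b c)"

definition is_real_A :: "'a::real_vector \<Rightarrow> 'a \<Rightarrow> bool" where
  "is_real_A one a \<longleftrightarrow> (\<exists>c::real. a = c *\<^sub>R one)"

definition alt_algebra :: "('a::real_vector \<Rightarrow> 'a \<Rightarrow> 'a) \<Rightarrow> 'a \<Rightarrow> ('a \<Rightarrow> 'a) \<Rightarrow> bool" where
  "alt_algebra mul one inv_c \<longleftrightarrow>
     bilinear mul \<and>
     (\<forall>a. mul one a = a \<and> mul a one = a) \<and>
     (\<forall>a b. assoc_A mul a a b = 0 \<and> assoc_A mul a b a = 0 \<and> assoc_A mul b a a = 0) \<and>
     linear inv_c \<and>
     (\<forall>c::real. inv_c (c *\<^sub>R one) = c *\<^sub>R one) \<and>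
     (\<forall>a. inv_c (inv_c a) = a) \<and>
     (\<forall>a b. inv_c (mul a b) = mul (inv_c b) (inv_c a))"

definition tr_A :: "('a::real_vector \<Rightarrow> 'a) \<Rightarrow> 'a \<Rightarrow> 'a" where
  "tr_A inv_c x = x + inv_c x"

definition nm_A :: "('a \<Rightarrow> 'a \<Rightarrow> 'a) \<Rightarrow> ('a \<Rightarrow> 'a) \<Rightarrow> 'a \<Rightarrow> 'a" where
  "nm_A mul inv_c x = mul x (inv_c x)"

definition sphere_A :: "('a::real_vector \<Rightarrow> 'a \<Rightarrow> 'a) \<Rightarrow> 'a \<Rightarrow> ('a \<Rightarrow> 'a) \<Rightarrow> 'a set" where
  "sphere_A mul one inv_c = {x. tr_A inv_c x = 0 \<and> nm_A mul inv_c x = one}"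

definition quadratic_cone_A :: "('a::real_vector \<Rightarrow> 'a \<Rightarrow> 'a) \<Rightarrow> 'a \<Rightarrow> ('a \<Rightarrow> 'a) \<Rightarrow> 'a set" where
  "quadratic_cone_A mul one inv_c =
     {x. is_real_A one x} \<union>
     {x. \<exists>t n::real. tr_A inv_c x = t *\<^sub>R one \<and> nm_A mul inv_c x = n *\<^sub>R one \<and> 4 * n > t\<^sup>2}"

definition adm_basis :: "('a::real_vector \<Rightarrow> 'a \<Rightarrow> 'a) \<Rightarrow> 'a \<Rightarrow> ('a \<Rightarrow> 'a) \<Rightarrow> nat \<Rightarrow> (nat \<Rightarrow> 'a) \<Rightarrow> bool" where
  "adm_basis mul one inv_c m v \<longleftrightarrow>
     1 \<le> m \<and> v 0 = one \<and>
     inj_on v {0..m} \<and> independent (v ` {0..m}) \<and>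
     (\<forall>s\<in>{1..m}. v s \<in> sphere_A mul one inv_c) \<and>
     (\<forall>s\<in>{1..m}. \<forall>t\<in>{1..m}. s \<noteq> t \<longrightarrow> mul (v s) (v t) = - mul (v t) (v s)) \<and>
     span (v ` {0..m}) \<subseteq> quadratic_cone_A mul one inv_c"

section \<open>Points of R^(n+1) as functions nat => real vanishing beyond n\<close>

definition xp :: "nat \<Rightarrow> (nat \<Rightarrow> real) \<Rightarrow> (nat \<Rightarrow> real)" where
  "xp p x = (\<lambda>i. if i \<le> p then x i else 0)"

definition xq_vec :: "(nat \<Rightarrow> 'a::real_vector) \<Rightarrow> nat \<Rightarrow> nat \<Rightarrow> (nat \<Rightarrow> real) \<Rightarrow> 'a" where
  "xq_vec v p m x = (\<Sum>s\<in>{p+1..m}. x s *\<^sub>R v s)"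

definition rq :: "nat \<Rightarrow> nat \<Rightarrow> (nat \<Rightarrow> real) \<Rightarrow> real" where
  "rq p m x = sqrt (\<Sum>s\<in>{p+1..m}. (x s)\<^sup>2)"

definition diamond :: "nat \<Rightarrow> (nat \<Rightarrow> real) \<Rightarrow> (nat \<Rightarrow> real)" where
  "diamond p x = (\<lambda>i. if i \<le> p then x i else - x i)"

definition PE :: "nat \<Rightarrow> ((nat \<Rightarrow> real) \<Rightarrow> 'a::real_vector) \<Rightarrow> (nat \<Rightarrow> real) \<Rightarrow> 'a" where
  "PE p h x = (1/2) *\<^sub>R (h x + h (diamond p x))"

definition PO :: "nat \<Rightarrow> ((nat \<Rightarrow> real) \<Rightarrow> 'a::real_vector) \<Rightarrow> (nat \<Rightarrow> real) \<Rightarrow> 'a" where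
  "PO p h x = (1/2) *\<^sub>R (h x - h (diamond p x))"

definition domain_p :: "nat \<Rightarrow> (nat \<Rightarrow> real) set \<Rightarrow> bool" where
  "domain_p p \<Omega> \<longleftrightarrow>
     \<Omega> \<noteq> {} \<and> \<Omega> \<subseteq> {y. \<forall>i>p. y i = 0} \<and>
     (\<forall>y\<in>\<Omega>. \<exists>e>0. \<forall>x. (\<forall>i>p. x i = 0) \<and> (\<forall>i\<le>p. \<bar>x i - y i\<bar> < e) \<longrightarrow> x \<in> \<Omega>) \<and>
     connected \<Omega>"

definition real_analytic_on_p :: "nat \<Rightarrow> (nat \<Rightarrow> real) set \<Rightarrow> ((nat \<Rightarrow> real) \<Rightarrow> 'a::real_normed_vector) \<Rightarrow> bool" where
  "real_analytic_on_p p \<Omega> g \<longleftrightarrow>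
     (\<forall>y\<in>\<Omega>. \<exists>e>0. \<exists>c :: (nat \<Rightarrow> nat) \<Rightarrow> 'a.
        \<forall>x. (\<forall>i>p. x i = 0) \<and> (\<forall>i\<le>p. \<bar>x i - y i\<bar> < e) \<longrightarrow>
          ((\<lambda>\<alpha>. (\<Prod>i\<le>p. (x i - y i) ^ \<alpha> i) *\<^sub>R c \<alpha>) has_sum g x) {\<alpha>. \<forall>i>p. \<alpha> i = 0})"

definition pd :: "nat \<Rightarrow> ((nat \<Rightarrow> real) \<Rightarrow> 'a::real_normed_vector) \<Rightarrow> (nat \<Rightarrow> real) \<Rightarrow> 'a" where
  "pd s g y = vector_derivative (\<lambda>t. g (y(s := y s + t))) (at 0)"

definition Dxp :: "('a::real_normed_vector \<Rightarrow> 'a \<Rightarrow> 'a) \<Rightarrow> (nat \<Rightarrow> 'a) \<Rightarrow> nat \<Rightarrow>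
                   ((nat \<Rightarrow> real) \<Rightarrow> 'a) \<Rightarrow> (nat \<Rightarrow> real) \<Rightarrow> 'a" where
  "Dxp mul v p g y = (\<Sum>s\<le>p. mul (v s) (pd s g y))"

definition Lap :: "nat \<Rightarrow> ((nat \<Rightarrow> real) \<Rightarrow> 'a::real_normed_vector) \<Rightarrow> (nat \<Rightarrow> real) \<Rightarrow> 'a" where
  "Lap p g y = (\<Sum>s\<le>p. pd s (pd s g) y)"

definition gck_c0 :: "real \<Rightarrow> real \<Rightarrow> nat \<Rightarrow> real" where
  "gck_c0 q r k = Gamma (q/2) * (-1)^k * r^(2*k) / (2^(2*k) * fact k * Gamma (real k + q/2))"

definition gck_c1 :: "real \<Rightarrow> real \<Rightarrow> nat \<Rightarrow> real" where
  "gck_c1 q r k = Gamma (q/2) * (-1)^k * r^(2*k) / (2^(2*k+1) * fact k * Gamma (real k + q/2 + 1))"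

definition hgck_c1 :: "real \<Rightarrow> real \<Rightarrow> nat \<Rightarrow> real" where
  "hgck_c1 q r k = Gamma (q/2 + 1) * (-1)^k * r^(2*k) / (2^(2*k) * fact k * Gamma (real k + q/2 + 1))"

text \<open>Series terms (q = m - p).\<close>

definition ser0 :: "nat \<Rightarrow> nat \<Rightarrow> ((nat \<Rightarrow> real) \<Rightarrow> 'a::real_normed_vector) \<Rightarrow> (nat \<Rightarrow> real) \<Rightarrow> nat \<Rightarrow> 'a" where
  "ser0 p m g x k = gck_c0 (real (m - p)) (rq p m x) k *\<^sub>R (Lap p ^^ k) g (xp p x)"

definition gser1 :: "('a::real_normed_vector \<Rightarrow> 'a \<Rightarrow> 'a) \<Rightarrow> (nat \<Rightarrow> 'a) \<Rightarrow> nat \<Rightarrow> nat \<Rightarrow>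
                     ((nat \<Rightarrow> real) \<Rightarrow> 'a) \<Rightarrow> (nat \<Rightarrow> real) \<Rightarrow> nat \<Rightarrow> 'a" where
  "gser1 mul v p m g x k = gck_c1 (real (m - p)) (rq p m x) k *\<^sub>R (Lap p ^^ k) (Dxp mul v p g) (xp p x)"

definition hser1 :: "nat \<Rightarrow> nat \<Rightarrow> ((nat \<Rightarrow> real) \<Rightarrow> 'a::real_normed_vector) \<Rightarrow> (nat \<Rightarrow> real) \<Rightarrow> nat \<Rightarrow> 'a" where
  "hser1 p m A1 x k = hgck_c1 (real (m - p)) (rq p m x) k *\<^sub>R (Lap p ^^ k) A1 (xp p x)"

definition GCK :: "('a::real_normed_vector \<Rightarrow> 'a \<Rightarrow> 'a) \<Rightarrow> (nat \<Rightarrow> 'a) \<Rightarrow> nat \<Rightarrow> nat \<Rightarrow>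
                   ((nat \<Rightarrow> real) \<Rightarrow> 'a) \<Rightarrow> (nat \<Rightarrow> real) \<Rightarrow> 'a" where
  "GCK mul v p m g x = (\<Sum>k. ser0 p m g x k) + mul (xq_vec v p m x) (\<Sum>k. gser1 mul v p m g x k)"

definition HGCK :: "('a::real_normed_vector \<Rightarrow> 'a \<Rightarrow> 'a) \<Rightarrow> (nat \<Rightarrow> 'a) \<Rightarrow> nat \<Rightarrow> nat \<Rightarrow>
                   ((nat \<Rightarrow> real) \<Rightarrow> 'a) \<Rightarrow> ((nat \<Rightarrow> real) \<Rightarrow> 'a) \<Rightarrow> (nat \<Rightarrow> real) \<Rightarrow> 'a" where
  "HGCK mul v p m A0 A1 x = (\<Sum>k. ser0 p m A0 x k) + mul (xq_vec v p m x) (\<Sum>k. hser1 p m A1 x k)"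

text \<open>"Defined at x": the defining series converge.\<close>

definition GCK_defined :: "('a::real_normed_vector \<Rightarrow> 'a \<Rightarrow> 'a) \<Rightarrow> (nat \<Rightarrow> 'a) \<Rightarrow> nat \<Rightarrow> nat \<Rightarrow>
                   ((nat \<Rightarrow> real) \<Rightarrow> 'a) \<Rightarrow> (nat \<Rightarrow> real) \<Rightarrow> bool" where
  "GCK_defined mul v p m g x \<longleftrightarrow> summable (ser0 p m g x) \<and> summable (gser1 mul v p m g x)"

definition HGCK_defined :: "nat \<Rightarrow> nat \<Rightarrow> ((nat \<Rightarrow> real) \<Rightarrow> 'a::real_normed_vector) \<Rightarrow>
                   ((nat \<Rightarrow> real) \<Rightarrow> 'a) \<Rightarrow> (nat \<Rightarrow> real) \<Rightarrow> bool" where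
  "HGCK_defined p m A0 A1 x \<longleftrightarrow> summable (ser0 p m A0 x) \<and> summable (hser1 p m A1 x)"

end

theory Submission
  imports Defs
begin


lemma coef_rel:
  assumes q: "q > (0::real)"
  shows "gck_c1 q r k = (1/q) * hgck_c1 q r k"
proof -
  have nz: "q/2 \<notin> \<int>\<^sub>\<le>\<^sub>0" using q by (auto elim!: nonpos_Ints_cases)
  have G: "Gamma (q/2 + 1) = (q/2) * Gamma (q/2)" using Gamma_plus1[OF nz] .
  have gp: "Gamma (q/2) > 0" using q by simp
  have gp2: "Gamma (real k + q/2 + 1) > 0" using q by (intro Gamma_real_pos) simp
  show ?thesis unfolding gck_c1_def hgck_c1_def G using q gp gp2
    by (simp add: field_simps power_add)
qed

lemma pd_local:
  assumes dom: "domain_p p \<Omega>" and eq: "\<forall>z\<in>\<Omega>. G z = H z" and s: "s \<le> p" and y: "y \<in> \<Omega>"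
  shows "pd s G y = pd s H y"
proof -
  from dom y obtain e where e: "e > 0"
    and box: "\<forall>x. (\<forall>i>p. x i = 0) \<and> (\<forall>i\<le>p. \<bar>x i - y i\<bar> < e) \<longrightarrow> x \<in> \<Omega>"
    unfolding domain_p_def by blast
  have y0: "\<forall>i>p. y i = 0" using dom y unfolding domain_p_def by blast
  have "eventually (\<lambda>t::real. dist t 0 < e) (nhds 0)"
    unfolding eventually_nhds_metric using e by blast
  hence ev: "eventually (\<lambda>t. t \<in> UNIV \<longrightarrow> G (y(s := y s + t)) = H (y(s := y s + t))) (nhds (0::real))"
  proof (rule eventually_mono)
    fix t :: real assume "dist t 0 < e"
    hence "y(s := y s + t) \<in> \<Omega>" using box y0 s e by (auto intro!: box[rule_format])
    thus "t \<in> UNIV \<longrightarrow> G (y(s := y s + t)) = H (y(s := y s + t))" using eq by blast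
  qed
  show ?thesis unfolding pd_def
    by (rule vector_derivative_cong_eq[OF ev]) auto
qed

lemma Lap_local:
  assumes dom: "domain_p p \<Omega>" and eq: "\<forall>z\<in>\<Omega>. G z = H z"
  shows "\<forall>y\<in>\<Omega>. (Lap p ^^ k) G y = (Lap p ^^ k) H y"
proof (induction k)
  case 0 then show ?case using eq by simp
next
  case (Suc k)
  show ?case
  proof
    fix y assume y: "y \<in> \<Omega>"
    have "\<forall>s\<le>p. \<forall>z\<in>\<Omega>. pd s ((Lap p ^^ k) G) z = pd s ((Lap p ^^ k) H) z"
      using pd_local[OF dom Suc.IH] by blast
    hence "\<forall>s\<le>p. pd s (pd s ((Lap p ^^ k) G)) y = pd s (pd s ((Lap p ^^ k) H)) y"
      using pd_local[OF dom _ _ y] by blast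
    thus "(Lap p ^^ Suc k) G y = (Lap p ^^ Suc k) H y"
      by (simp add: Lap_def)
  qed
qed

lemma pd_zero: "pd s (\<lambda>_. 0) y = 0"
  unfolding pd_def by simp

lemma Lap_zero: "(Lap p ^^ k) (\<lambda>_. 0) = (\<lambda>_. 0)"
  by (induction k) (simp_all add: Lap_def pd_zero[unfolded pd_def] pd_def)

lemma diamond_xp: "xp p (diamond p x) = xp p x"
  by (auto simp: xp_def diamond_def)

lemma diamond_rq: "rq p m (diamond p x) = rq p m x"
  unfolding rq_def diamond_def by (intro arg_cong[where f=sqrt] sum.cong) auto

lemma diamond_xq: "xq_vec v p m (diamond p x) = - xq_vec v p m x"
  unfolding xq_vec_def diamond_def by (simp add: sum_negf[symmetric])

theorem corollary3p17:
  fixes mul :: "'a::euclidean_space \<Rightarrow> 'a \<Rightarrow> 'a" and one :: 'a and inv_c :: "'a \<Rightarrow> 'a"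
    and v :: "nat \<Rightarrow> 'a" and m p :: nat and \<Omega>0 :: "(nat \<Rightarrow> real) set"
    and A0 A1 f0 :: "(nat \<Rightarrow> real) \<Rightarrow> 'a" and x :: "nat \<Rightarrow> real"
  assumes alg: "alt_algebra mul one inv_c"
    and dim: "DIM('a) > 1"
    and sph: "sphere_A mul one inv_c \<noteq> {}"
    and basis: "adm_basis mul one inv_c m v"
    and pm: "p < m"
    and dom: "domain_p p \<Omega>0"
    and anA0: "real_analytic_on_p p \<Omega>0 A0"
    and anA1: "real_analytic_on_p p \<Omega>0 A1"
    and xpt: "\<forall>i>m. x i = 0"
    and xin: "xp p x \<in> \<Omega>0"
  shows "(GCK_defined mul v p m A0 x \<and> HGCK_defined p m A0 (\<lambda>_. 0) x
           \<and> HGCK_defined p m (\<lambda>_. 0) (Dxp mul v p A0) x \<longrightarrow>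
         GCK mul v p m A0 x =
           HGCK mul v p m A0 (\<lambda>_. 0) x
           + (1 / real (m - p)) *\<^sub>R HGCK mul v p m (\<lambda>_. 0) (Dxp mul v p A0) x)
       \<and> (real_analytic_on_p p \<Omega>0 f0 \<and> (\<forall>y\<in>\<Omega>0. Dxp mul v p f0 y = A1 y)
           \<and> HGCK_defined p m A0 A1 x
           \<and> GCK_defined mul v p m A0 x \<and> GCK_defined mul v p m A0 (diamond p x)
           \<and> GCK_defined mul v p m f0 x \<and> GCK_defined mul v p m f0 (diamond p x) \<longrightarrow>
         HGCK mul v p m A0 A1 x =
           PE p (GCK mul v p m A0) x + real (m - p) *\<^sub>R PO p (GCK mul v p m f0) x)" (is "?P1 \<and> ?P2")
proof -
  have alg': "bilinear mul" using alg unfolding alt_algebra_def by blast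
  have lin: "linear (mul a)" for a using alg' unfolding bilinear_def by blast
  have lin2: "linear (\<lambda>b. mul b a)" for a using alg' unfolding bilinear_def by blast
  define q where "q = real (m - p)"
  have q: "q > 0" using pm unfolding q_def by simp
  have mscale: "mul a (c *\<^sub>R b) = c *\<^sub>R mul a b" for a b c using linear_scale[OF lin] by blast
  have mzero: "mul a 0 = 0" for a using linear_0[OF lin] by blast
  have mneg: "mul (- a) b = - mul a b" for a b using linear_neg[OF lin2] by blast
  have ser0z: "ser0 p m (\<lambda>_. 0) x = (\<lambda>_. 0)" for x
    by (simp add: ser0_def Lap_zero fun_eq_iff)
  have hser1z: "hser1 p m (\<lambda>_. 0) x = (\<lambda>_. 0)" for x
    by (simp add: hser1_def Lap_zero fun_eq_iff)
  have g_h: "gser1 mul v p m g y = (\<lambda>k. (1/q) *\<^sub>R hser1 p m (Dxp mul v p g) y k)" for g y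
  proof -
    have c: "gck_c1 (real(m-p)) r k = (1/q) * hgck_c1 (real(m-p)) r k" for r k
      using coef_rel[OF q] unfolding q_def by simp
    show ?thesis by (simp add: fun_eq_iff gser1_def hser1_def c)
  qed
  have part1: ?P1
  proof
    assume H: "GCK_defined mul v p m A0 x \<and> HGCK_defined p m A0 (\<lambda>_. 0) x
           \<and> HGCK_defined p m (\<lambda>_. 0) (Dxp mul v p A0) x"
    have sm: "summable (hser1 p m (Dxp mul v p A0) x)" using H unfolding HGCK_defined_def by blast
    have "(\<Sum>k. gser1 mul v p m A0 x k) = (1/q) *\<^sub>R (\<Sum>k. hser1 p m (Dxp mul v p A0) x k)"
      unfolding g_h using suminf_scaleR_right[OF sm] by simp
    thus "GCK mul v p m A0 x = HGCK mul v p m A0 (\<lambda>_. 0) x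
           + (1 / real (m - p)) *\<^sub>R HGCK mul v p m (\<lambda>_. 0) (Dxp mul v p A0) x"
      unfolding GCK_def HGCK_def ser0z hser1z by (simp add: mscale mzero q_def)
  qed
  have part2: ?P2
  proof
    assume H: "real_analytic_on_p p \<Omega>0 f0 \<and> (\<forall>y\<in>\<Omega>0. Dxp mul v p f0 y = A1 y)
           \<and> HGCK_defined p m A0 A1 x
           \<and> GCK_defined mul v p m A0 x \<and> GCK_defined mul v p m A0 (diamond p x)
           \<and> GCK_defined mul v p m f0 x \<and> GCK_defined mul v p m f0 (diamond p x)"
    have sm: "summable (hser1 p m A1 x)" using H unfolding HGCK_defined_def by blast
    have L: "(Lap p ^^ k) (Dxp mul v p f0) (xp p x) = (Lap p ^^ k) A1 (xp p x)" for k
      using Lap_local[OF dom, of "Dxp mul v p f0" A1 k] H xin by blast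
    have hh: "hser1 p m (Dxp mul v p f0) x = hser1 p m A1 x"
      by (simp add: fun_eq_iff hser1_def L)
    have S: "(\<Sum>k. gser1 mul v p m f0 x k) = (1/q) *\<^sub>R (\<Sum>k. hser1 p m A1 x k)"
      unfolding g_h hh using suminf_scaleR_right[OF sm] by simp
    have d0: "ser0 p m g (diamond p x) = ser0 p m g x" for g
      by (simp add: fun_eq_iff ser0_def diamond_xp diamond_rq)
    have d1: "gser1 mul v p m g (diamond p x) = gser1 mul v p m g x" for g
      by (simp add: fun_eq_iff gser1_def diamond_xp diamond_rq)
    have PE: "PE p (GCK mul v p m A0) x = (\<Sum>k. ser0 p m A0 x k)"
      unfolding PE_def GCK_def d0 d1 diamond_xq mneg by (simp add: scaleR_2[symmetric] del: scaleR_2)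
    have PO: "PO p (GCK mul v p m f0) x = mul (xq_vec v p m x) (\<Sum>k. gser1 mul v p m f0 x k)"
      unfolding PO_def GCK_def d0 d1 diamond_xq mneg by (simp add: scaleR_2[symmetric] del: scaleR_2)
    show "HGCK mul v p m A0 A1 x =
           PE p (GCK mul v p m A0) x + real (m - p) *\<^sub>R PO p (GCK mul v p m f0) x"
      unfolding PE PO S HGCK_def mscale using q by (simp add: q_def)
  qed
  show ?thesis using part1 part2 by blast
qed

end
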